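(* For every combinatorial auction with SOS valuations and single-dimensional signals from a signal space of size $k\ge2$, i.e. $s_i\in\{0,1,\dots,k-1\}$ for all $i$, the mechanism $k$-HL is universally ex-post IC-IR and gives a $(k+3)$-approximation to the optimal social welfare: for every true profile $\mathbf{s}$, its expected welfare is at least $\frac{1}{k+3}\max_{T}\sum_i v_{iT_i}(\mathbf{s})$ over allocations $T$.
   Context: Setting: $n$ agents, $m$ items; agent $i$ has private signal $s_i\in\{0,\dots,k-1\}$; her value for bundle $T$ is $v_{iT}(\mathbf{s})\ge0$, public, weakly increasing in each coordinate, strictly in $s_i$; each $v_{iT}$ is SOS: for every coordinate $j$, $s_j$, $\delta\ge0$, $\mathbf{s}'_{-j}\le\mathbf{s}_{-j}$ coordinate-wise, $v(\mathbf{s}'_{-j},s_j+\delta)-v(\mathbf{s}'_{-j},s_j)\ge v(\mathbf{s}_{-j},s_j+\delta)-v(\mathbf{s}_{-j},s_j)$. Allocations assign disjoint bundles; agent utility is value of received bundle at the true profile minus payment; ex-post IC/IR and universal ex-post IC-IR as usual. Random Threshold (on reports $\mathbf{s}$): choose $\ell$ uniformly in $\{1,\dots,k-1\}$; $N_{\ge\ell}=\{i:s_i\ge\ell\}$, $N_{<\ell}$ the rest; for $i\in N_{\ge\ell}$, $\bar v_{iT}=v_{iT}(\mathbf{s}_{N_{<\ell}},\boldsymbol{\ell}_{N_{\ge\ell}})$, else $\bar v_{iT}=0$; allocate $\bar T\in\arg\max\sum_{i\in N_{\ge\ell}}\bar v_{i\bar T_i}$ among agents of $N_{\ge\ell}$;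 agent receiving $\bar T_i$ pays $v_{i\bar T_i}(\mathbf{s}_{-i},\ell-1)$. Random Sampling: split agents uniformly at random into $A,B$; for $i\in B$, $\tilde v_{iT}=v_{iT}(\mathbf{s}_A,\mathbf{0}_B)$, for $i\in A$, $\tilde v_{iT}=0$; allocate $\tilde T\in\arg\max\sum_{i\in B}\tilde v_{i\tilde T_i}$ among agents of $B$; no payments. $k$-HL: run Random Threshold with probability $\frac{k-1}{k+3}$, otherwise Random Sampling. *)

theory Defs
  imports "HOL-Probability.Probability_Mass_Function"
begin

(* Agents are 0..<n, items are 0..<m, signals are 0..<k.
   A signal profile is an element of the extensional function space below. *)

type_synonym profile = "nat \<Rightarrow> nat"

(* v i T s : value of agent i for bundle T at signal profile s *)
type_synonym valuations = "nat \<Rightarrow> nat set \<Rightarrow> profile \<Rightarrow> real"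

(* a deterministic mechanism: allocation rule (reports -> agent -> bundle) and
   payment rule (reports -> agent -> payment) *)
type_synonym mech = "(profile \<Rightarrow> nat \<Rightarrow> nat set) \<times> (profile \<Rightarrow> nat \<Rightarrow> real)"

definition profiles :: "nat \<Rightarrow> nat \<Rightarrow> profile set" where
  "profiles n k = PiE {..<n} (\<lambda>_. {..<k})"

definition val :: "valuations \<Rightarrow> nat \<Rightarrow> nat set \<Rightarrow> profile \<Rightarrow> real" where
  "val v i T s = (if T = {} then 0 else v i T s)"

definition SOS_valuations :: "nat \<Rightarrow> nat \<Rightarrow> nat \<Rightarrow> valuations \<Rightarrow> bool" where
  "SOS_valuations n m k v \<longleftrightarrow>
    (\<forall>i<n. \<forall>T. T \<noteq> {} \<and> T \<subseteq> {..<m} \<longrightarrow>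
       (\<forall>s\<in>profiles n k. 0 \<le> v i T s)
     \<and> (\<forall>s\<in>profiles n k. \<forall>j<n. \<forall>x<k. s j \<le> x \<longrightarrow> v i T s \<le> v i T (s(j := x)))
     \<and> (\<forall>s\<in>profiles n k. \<forall>x<k. s i < x \<longrightarrow> v i T s < v i T (s(i := x)))
     \<and> (\<forall>s\<in>profiles n k. \<forall>s'\<in>profiles n k. \<forall>j<n. \<forall>d. s j + d < k \<longrightarrow>
          (\<forall>l<n. l \<noteq> j \<longrightarrow> s' l \<le> s l) \<longrightarrow>
          v i T (s(j := s j + d)) - v i T s
            \<le> v i T (s'(j := s j + d)) - v i T (s'(j := s j))))"

definition allocs :: "nat set \<Rightarrow> nat \<Rightarrow> (nat \<Rightarrow> nat set) set" where
  "allocs N m = {T. (\<forall>i. T i \<subseteq> {..<m}) \<and> (\<forall>i. i \<notin> N \<longrightarrow> T i = {})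
                    \<and> (\<forall>i j. i \<noteq> j \<longrightarrow> T i \<inter> T j = {})}"

definition argmax_rule :: "nat \<Rightarrow> nat \<Rightarrow> (nat set \<Rightarrow> (nat \<Rightarrow> nat set \<Rightarrow> real) \<Rightarrow> nat \<Rightarrow> nat set) \<Rightarrow> bool" where
  "argmax_rule n m sel \<longleftrightarrow>
    (\<forall>N \<subseteq> {..<n}. \<forall>w. sel N w \<in> allocs N m \<and>
        (\<forall>T\<in>allocs N m. (\<Sum>i\<in>N. w i (T i)) \<le> (\<Sum>i\<in>N. w i (sel N w i))))"

definition RT_mech :: "nat \<Rightarrow> valuations \<Rightarrow> (nat set \<Rightarrow> (nat \<Rightarrow> nat set \<Rightarrow> real) \<Rightarrow> nat \<Rightarrow> nat set)
                        \<Rightarrow> nat \<Rightarrow> mech" where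
  "RT_mech n v sel l =
    (let alloc = (\<lambda>s. let Nge = {i. i < n \<and> l \<le> s i} in
                   sel Nge (\<lambda>i T. if i \<in> Nge
                                   then val v i T (\<lambda>j. if j \<in> Nge then l else s j) else 0))
     in (alloc, (\<lambda>s i. val v i (alloc s i) (s(i := l - 1)))))"

definition RS_mech :: "valuations \<Rightarrow> (nat set \<Rightarrow> (nat \<Rightarrow> nat set \<Rightarrow> real) \<Rightarrow> nat \<Rightarrow> nat set)
                        \<Rightarrow> nat set \<Rightarrow> mech" where
  "RS_mech v sel B =
    ((\<lambda>s. sel B (\<lambda>i T. if i \<in> B then val v i T (\<lambda>j. if j \<in> B then 0 else s j) else 0)),
     (\<lambda>s i. 0))"

definition RT :: "nat \<Rightarrow> nat \<Rightarrow> valuations \<Rightarrow> (nat set \<Rightarrow> (nat \<Rightarrow> nat set \<Rightarrow> real) \<Rightarrow> nat \<Rightarrow> nat set)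
                   \<Rightarrow> mech pmf" where
  "RT n k v sel = map_pmf (RT_mech n v sel) (pmf_of_set {1..<k})"

definition RS :: "nat \<Rightarrow> valuations \<Rightarrow> (nat set \<Rightarrow> (nat \<Rightarrow> nat set \<Rightarrow> real) \<Rightarrow> nat \<Rightarrow> nat set)
                   \<Rightarrow> mech pmf" where
  "RS n v sel = map_pmf (RS_mech v sel) (pmf_of_set (Pow {..<n}))"

definition kHL :: "nat \<Rightarrow> nat \<Rightarrow> valuations \<Rightarrow> (nat set \<Rightarrow> (nat \<Rightarrow> nat set \<Rightarrow> real) \<Rightarrow> nat \<Rightarrow> nat set)
                   \<Rightarrow> mech pmf" where
  "kHL n k v sel =
     bind_pmf (bernoulli_pmf ((real k - 1) / (real k + 3)))
              (\<lambda>b. if b then RT n k v sel else RS n v sel)"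

definition utility :: "valuations \<Rightarrow> mech \<Rightarrow> nat \<Rightarrow> profile \<Rightarrow> profile \<Rightarrow> real" where
  "utility v M i r s = val v i (fst M r i) s - snd M r i"

definition expost_IC_IR :: "nat \<Rightarrow> nat \<Rightarrow> valuations \<Rightarrow> mech \<Rightarrow> bool" where
  "expost_IC_IR n k v M \<longleftrightarrow>
    (\<forall>s\<in>profiles n k. \<forall>i<n. 0 \<le> utility v M i s s
        \<and> (\<forall>x<k. utility v M i (s(i := x)) s \<le> utility v M i s s))"

definition universal_expost_IC_IR :: "nat \<Rightarrow> nat \<Rightarrow> valuations \<Rightarrow> mech pmf \<Rightarrow> bool" where
  "universal_expost_IC_IR n k v D \<longleftrightarrow> (\<forall>M\<in>set_pmf D. expost_IC_IR n k v M)"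

definition welfare :: "nat \<Rightarrow> valuations \<Rightarrow> mech \<Rightarrow> profile \<Rightarrow> real" where
  "welfare n v M s = (\<Sum>i<n. val v i (fst M s i) s)"

definition OPT :: "nat \<Rightarrow> nat \<Rightarrow> valuations \<Rightarrow> profile \<Rightarrow> real" where
  "OPT n m v s = Max ((\<lambda>T. \<Sum>i<n. val v i (T i) s) ` allocs {..<n} m)"

end

theory Submission
  imports Defs
begin

lemma profiles_iff:
  "s \<in> profiles n k \<longleftrightarrow> (\<forall>j<n. s j < k) \<and> (\<forall>j. n \<le> j \<longrightarrow> s j = undefined)"
  unfolding profiles_def PiE_iff extensional_def by auto

definition goodf :: "nat \<Rightarrow> nat \<Rightarrow> (profile \<Rightarrow> real) \<Rightarrow> bool" where
 "goodf n k f \<longleftrightarrow> (\<forall>s\<in>profiles n k. 0 \<le> f s)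
     \<and> (\<forall>s\<in>profiles n k. \<forall>j<n. \<forall>x<k. s j \<le> x \<longrightarrow> f s \<le> f (s(j := x)))
     \<and> (\<forall>s\<in>profiles n k. \<forall>s'\<in>profiles n k. \<forall>j<n. \<forall>d. s j + d < k \<longrightarrow>
          (\<forall>l<n. l \<noteq> j \<longrightarrow> s' l \<le> s l) \<longrightarrow>
          f (s(j := s j + d)) - f s
            \<le> f (s'(j := s j + d)) - f (s'(j := s j)))"

lemma goodf_nonneg: "goodf n k f \<Longrightarrow> s \<in> profiles n k \<Longrightarrow> 0 \<le> f s"
  unfolding goodf_def by blast

lemma goodf_mono1: "goodf n k f \<Longrightarrow> s \<in> profiles n k \<Longrightarrow> j < n \<Longrightarrow> x < k \<Longrightarrow> s j \<le> x
  \<Longrightarrow> f s \<le> f (s(j := x))"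
  unfolding goodf_def by blast

lemma goodf_sos: "goodf n k f \<Longrightarrow> s \<in> profiles n k \<Longrightarrow> s' \<in> profiles n k \<Longrightarrow> j < n
  \<Longrightarrow> s j + d < k \<Longrightarrow> (\<forall>l<n. l \<noteq> j \<longrightarrow> s' l \<le> s l) \<Longrightarrow>
          f (s(j := s j + d)) - f s
            \<le> f (s'(j := s j + d)) - f (s'(j := s j))"
  unfolding goodf_def by blast

lemma goodf_val: assumes "SOS_valuations n m k v" "i < n" "T \<subseteq> {..<m}"
  shows "goodf n k (val v i T)"
proof (cases "T = {}")
  case True then show ?thesis by (simp add: goodf_def val_def)
next
  case False
  have "(\<forall>s\<in>profiles n k. 0 \<le> v i T s)
     \<and> (\<forall>s\<in>profiles n k. \<forall>j<n. \<forall>x<k. s j \<le> x \<longrightarrow> v i T s \<le> v i T (s(j := x)))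
     \<and> (\<forall>s\<in>profiles n k. \<forall>x<k. s i < x \<longrightarrow> v i T s < v i T (s(i := x)))
     \<and> (\<forall>s\<in>profiles n k. \<forall>s'\<in>profiles n k. \<forall>j<n. \<forall>d. s j + d < k \<longrightarrow>
          (\<forall>l<n. l \<noteq> j \<longrightarrow> s' l \<le> s l) \<longrightarrow>
          v i T (s(j := s j + d)) - v i T s
            \<le> v i T (s'(j := s j + d)) - v i T (s'(j := s j)))"
  proof -
    have H: "\<forall>i<n. \<forall>T. T \<noteq> {} \<and> T \<subseteq> {..<m} \<longrightarrow>
       (\<forall>s\<in>profiles n k. 0 \<le> v i T s)
     \<and> (\<forall>s\<in>profiles n k. \<forall>j<n. \<forall>x<k. s j \<le> x \<longrightarrow> v i T s \<le> v i T (s(j := x)))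
     \<and> (\<forall>s\<in>profiles n k. \<forall>x<k. s i < x \<longrightarrow> v i T s < v i T (s(i := x)))
     \<and> (\<forall>s\<in>profiles n k. \<forall>s'\<in>profiles n k. \<forall>j<n. \<forall>d. s j + d < k \<longrightarrow>
          (\<forall>l<n. l \<noteq> j \<longrightarrow> s' l \<le> s l) \<longrightarrow>
          v i T (s(j := s j + d)) - v i T s
            \<le> v i T (s'(j := s j + d)) - v i T (s'(j := s j)))"
      using assms(1) unfolding SOS_valuations_def .
    show ?thesis using mp[OF spec[OF mp[OF spec[OF H, of i] assms(2)], of T] conjI[OF False assms(3)]] .
  qed
  then show ?thesis using False unfolding goodf_def val_def by simp
qed

lemma goodf_mono_aux:
  assumes g: "goodf n k f"
  shows "finite D \<Longrightarrow> D \<subseteq> {..<n} \<Longrightarrow> \<forall>p q. p \<in> profiles n k \<longrightarrow> q \<in> profiles n k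
     \<longrightarrow> (\<forall>j<n. p j \<le> q j) \<longrightarrow> (\<forall>j. j \<notin> D \<longrightarrow> p j = q j) \<longrightarrow> f p \<le> f q"
proof (induction D rule: finite_induct)
  case empty
  show ?case
  proof (intro allI impI)
    fix p q :: profile assume "\<forall>j. j \<notin> {} \<longrightarrow> p j = q j"
    then have "p = q" by (simp add: fun_eq_iff)
    then show "f p \<le> f q" by simp
  qed
next
  case (insert d D)
  show ?case
  proof (intro allI impI)
    fix p q assume p: "p \<in> profiles n k" and q: "q \<in> profiles n k"
      and le: "\<forall>j<n. p j \<le> q j" and eq: "\<forall>j. j \<notin> insert d D \<longrightarrow> p j = q j"
    have dn: "d < n" using insert.prems by auto
    define z where "z = p(d := q d)"
    have z: "z \<in> profiles n k" unfolding z_def using p q dn by (auto simp: profiles_iff)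
    have "f p \<le> f z" unfolding z_def
      using goodf_mono1[OF g p dn, of "q d"] q dn le by (auto simp: profiles_iff)
    also have "f z \<le> f q"
      using insert.IH insert.prems z q le eq unfolding z_def by auto
    finally show "f p \<le> f q" .
  qed
qed

lemma goodf_mono:
  assumes g: "goodf n k f" and p: "p \<in> profiles n k" and q: "q \<in> profiles n k"
    and le: "\<forall>j<n. p j \<le> q j"
  shows "f p \<le> f q"
  using goodf_mono_aux[OF g, of "{..<n}"] p q le by (auto simp: profiles_iff)

lemma raise_in:
  "p \<in> profiles n k \<Longrightarrow> hi \<in> profiles n k \<Longrightarrow> D \<subseteq> {..<n}
   \<Longrightarrow> (\<lambda>j. if j \<in> D then hi j else p j) \<in> profiles n k"
  by (auto simp: profiles_iff)

lemma goodf_raise_aux: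
  assumes g: "goodf n k f" and hi: "hi \<in> profiles n k"
  shows "finite D \<Longrightarrow> D \<subseteq> {..<n} \<Longrightarrow> \<forall>p p'. p \<in> profiles n k \<longrightarrow> p' \<in> profiles n k
     \<longrightarrow> (\<forall>j<n. p' j \<le> p j) \<longrightarrow> (\<forall>j\<in>D. p j = p' j \<and> p j \<le> hi j) \<longrightarrow>
     f (\<lambda>j. if j \<in> D then hi j else p j) - f p \<le> f (\<lambda>j. if j \<in> D then hi j else p' j) - f p'"
proof (induction D rule: finite_induct)
  case empty
  then show ?case by simp
next
  case (insert d D)
  show ?case
  proof (intro allI impI)
    fix p p' assume p: "p \<in> profiles n k" and p': "p' \<in> profiles n k"
      and le: "\<forall>j<n. p' j \<le> p j" and onD: "\<forall>j\<in>insert d D. p j = p' j \<and> p j \<le> hi j"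
    have dn: "d < n" and Dn: "D \<subseteq> {..<n}" using insert.prems by auto
    define q where "q = (\<lambda>j. if j \<in> D then hi j else p j)"
    define q' where "q' = (\<lambda>j. if j \<in> D then hi j else p' j)"
    have q: "q \<in> profiles n k" unfolding q_def using raise_in[OF p hi Dn] .
    have q': "q' \<in> profiles n k" unfolding q'_def using raise_in[OF p' hi Dn] .
    have qd: "q d = p d" "q' d = p d" using insert.hyps onD by (auto simp: q_def q'_def)
    have hid: "q d + (hi d - p d) = hi d" using qd onD by auto
    have hik: "hi d < k" using hi dn by (auto simp: profiles_iff)
    have lel: "\<forall>l<n. l \<noteq> d \<longrightarrow> q' l \<le> q l" using le by (auto simp: q_def q'_def)
    have sos: "f (q(d := q d + (hi d - p d))) - f q
            \<le> f (q'(d := q d + (hi d - p d))) - f (q'(d := q d))"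
      using goodf_sos[OF g q q' dn, of "hi d - p d"] hid hik lel by simp
    have e1: "(\<lambda>j. if j \<in> insert d D then hi j else p j) = q(d := hi d)"
      by (auto simp: q_def)
    have e2: "(\<lambda>j. if j \<in> insert d D then hi j else p' j) = q'(d := hi d)"
      by (auto simp: q'_def)
    have e3: "q'(d := q d) = q'" using qd by auto
    have ih: "f q - f p \<le> f q' - f p'"
      using insert.IH Dn p p' le onD unfolding q_def q'_def by auto
    show "f (\<lambda>j. if j \<in> insert d D then hi j else p j) - f p
       \<le> f (\<lambda>j. if j \<in> insert d D then hi j else p' j) - f p'"
      unfolding e1 e2 using sos ih hid e3 by simp
  qed
qed


lemma telescope_nat:
  fixes g :: "nat \<Rightarrow> real"
  shows "(\<Sum>l\<in>{1..t}. g l - g (l - 1)) = g t - g 0"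
  by (induction t) (auto simp: sum.cl_ivl_Suc)

lemma rt_agent:
  assumes g: "goodf n k f" and s: "s \<in> profiles n k" and i: "i < n"
  shows "f s - f (s(i:=0)) \<le>
    (\<Sum>l\<in>{1..<k}. if l \<le> s i then f (\<lambda>j. if j < n \<and> l \<le> s j then l else s j) else 0)"
proof -
  define q where "q l = (\<lambda>j. if j < n \<and> l \<le> s j then l else s j)" for l
  have sik: "s i < k" using s i by (auto simp: profiles_iff)
  have step: "f (s(i:=l)) - f (s(i:=l-1)) \<le> f (q l)" if l: "1 \<le> l" "l \<le> s i" for l
  proof -
    have S: "s(i:=l-1) \<in> profiles n k" using s i sik l by (auto simp: profiles_iff)
    have Q: "q l \<in> profiles n k" using s l sik by (auto simp: profiles_iff q_def)
    have "f ((s(i:=l-1))(i := (s(i:=l-1)) i + 1)) - f (s(i:=l-1))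
       \<le> f ((q l)(i := (s(i:=l-1)) i + 1)) - f ((q l)(i := (s(i:=l-1)) i))"
      by (rule goodf_sos[OF g S Q i]) (use l sik in \<open>auto simp: q_def\<close>)
    moreover have "(s(i:=l-1))(i := (s(i:=l-1)) i + 1) = s(i:=l)" using l by auto
    moreover have "(q l)(i := (s(i:=l-1)) i + 1) = q l" using l i by (auto simp: q_def)
    moreover have "0 \<le> f ((q l)(i := (s(i:=l-1)) i))"
      using goodf_nonneg[OF g] Q i sik l by (auto simp: profiles_iff)
    ultimately show ?thesis by simp
  qed
  have "f s - f (s(i:=0)) = (\<Sum>l\<in>{1..s i}. f (s(i:=l)) - f (s(i:=l-1)))"
    using telescope_nat[of "\<lambda>l. f (s(i:=l))" "s i"] by simp
  also have "\<dots> \<le> (\<Sum>l\<in>{1..s i}. f (q l))" by (rule sum_mono) (use step in auto)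
  also have "{1..s i} = {l \<in> {1..<k}. l \<le> s i}" using sik by auto
  also have "(\<Sum>l\<in>{l \<in> {1..<k}. l \<le> s i}. f (q l)) =
      (\<Sum>l\<in>{1..<k}. if l \<le> s i then f (q l) else 0)" by (rule sum.inter_filter) simp
  finally show ?thesis unfolding q_def .
qed

lemma rs_agent:
  assumes g: "goodf n k f" and s: "s \<in> profiles n k" and i: "i < n"
  shows "2 ^ n * f (s(i:=0)) \<le>
    4 * (\<Sum>B\<in>Pow {..<n}. if i \<in> B then f (\<lambda>j. if j \<in> B then 0 else s j) else 0)"
proof -
  define Oth where "Oth = {..<n} - {i}"
  define h where "h C = f (\<lambda>j. if j \<in> insert i C then 0 else s j)" for C
  have kpos: "0 < k" using s i by (auto simp: profiles_iff)
  have iO: "i \<notin> Oth" and nO: "{..<n} = insert i Oth" and fO: "finite Oth" using i by (auto simp: Oth_def)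
  have "(\<Sum>B\<in>Pow {..<n}. if i \<in> B then f (\<lambda>j. if j \<in> B then 0 else s j) else 0)
      = (\<Sum>B\<in>Pow Oth \<union> insert i ` Pow Oth. if i \<in> B then f (\<lambda>j. if j \<in> B then 0 else s j) else 0)"
    by (simp add: nO Pow_insert)
  also have "\<dots> = (\<Sum>B\<in>Pow Oth. if i \<in> B then f (\<lambda>j. if j \<in> B then 0 else s j) else 0)
      + (\<Sum>B\<in>insert i ` Pow Oth. if i \<in> B then f (\<lambda>j. if j \<in> B then 0 else s j) else 0)"
    by (rule sum.union_disjoint) (use fO iO in auto)
  also have "(\<Sum>B\<in>Pow Oth. if i \<in> B then f (\<lambda>j. if j \<in> B then 0 else s j) else 0) = 0"
    using iO by (intro sum.neutral) auto
  also have "(\<Sum>B\<in>insert i ` Pow Oth. if i \<in> B then f (\<lambda>j. if j \<in> B then 0 else s j) else 0)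
      = (\<Sum>C\<in>Pow Oth. h C)"
  proof (subst sum.reindex)
    show "inj_on (insert i) (Pow Oth)" unfolding inj_on_def
      by (metis PowD iO insert_ident subsetD)
  qed (simp add: h_def)
  finally have E1: "(\<Sum>B\<in>Pow {..<n}. if i \<in> B then f (\<lambda>j. if j \<in> B then 0 else s j) else 0)
     = (\<Sum>C\<in>Pow Oth. h C)" by simp
  define z0 :: profile where "z0 = (\<lambda>j. if j < n then 0 else undefined)"
  have z0: "z0 \<in> profiles n k" using kpos by (auto simp: profiles_iff z0_def)
  have pair: "f (s(i:=0)) \<le> h C + h (Oth - C)" if C: "C \<subseteq> Oth" for C
  proof -
    define p where "p = (\<lambda>j. if j \<in> insert i C then 0 else s j)"
    have p: "p \<in> profiles n k" using s kpos C i by (auto simp: profiles_iff p_def Oth_def)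
    have CO: "C \<subseteq> {..<n}" "finite C" using C fO by (auto simp: Oth_def intro: finite_subset)
    have R: "f (\<lambda>j. if j \<in> C then s j else p j) - f p \<le> f (\<lambda>j. if j \<in> C then s j else z0 j) - f z0"
    proof -
      have pre: "\<forall>j\<in>C. p j = z0 j \<and> p j \<le> s j" using CO by (auto simp: p_def z0_def)
      have le0: "\<forall>j<n. z0 j \<le> p j" by (simp add: z0_def)
      show ?thesis using goodf_raise_aux[OF g s CO(2) CO(1), rule_format, OF p z0 le0[rule_format] pre[rule_format]] .
    qed
    have e1: "(\<lambda>j. if j \<in> C then s j else p j) = s(i:=0)" using C iO by (auto simp: p_def fun_eq_iff)
    have e2: "(\<lambda>j. if j \<in> C then s j else z0 j) = (\<lambda>j. if j \<in> insert i (Oth - C) then 0 else s j)"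
      using C s i by (auto simp: z0_def Oth_def profiles_iff fun_eq_iff)
    have "0 \<le> f z0" using goodf_nonneg[OF g z0] .
    then show ?thesis using R e1 e2 by (simp add: h_def p_def)
  qed
  have sw: "(\<Sum>C\<in>Pow Oth. h (Oth - C)) = (\<Sum>C\<in>Pow Oth. h C)"
    by (rule sum.reindex_bij_witness[of _ "\<lambda>C. Oth - C" "\<lambda>C. Oth - C"]) auto
  have "(\<Sum>C\<in>Pow Oth. f (s(i:=0))) \<le> (\<Sum>C\<in>Pow Oth. h C + h (Oth - C))"
    by (rule sum_mono) (use pair in auto)
  also have "\<dots> = 2 * (\<Sum>C\<in>Pow Oth. h C)" by (simp add: sum.distrib sw)
  finally have "2 ^ (n - 1) * f (s(i:=0)) \<le> 2 * (\<Sum>C\<in>Pow Oth. h C)"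
    using fO i by (simp add: card_Pow Oth_def card_Diff_singleton)
  then have "2 * (2 ^ (n - 1) * f (s(i:=0))) \<le> 4 * (\<Sum>C\<in>Pow Oth. h C)" by linarith
  moreover have Y: "(2::real) ^ n = 2 * 2 ^ (n - 1)" using i
    by (metis Suc_pred' gr_implies_not0 neq0_conv power_Suc)
  moreover have Z: "(2::real) ^ n * f (s(i:=0)) = 2 * (2 ^ (n - 1) * f (s(i:=0)))"
    unfolding Y by (simp only: mult.assoc)
  ultimately show ?thesis unfolding E1 by linarith
qed


lemma alloc_bundle:
  assumes "argmax_rule n m sel" "N \<subseteq> {..<n}"
  shows "sel N w \<in> allocs N m"
    "\<And>T'. T' \<in> allocs N m \<Longrightarrow> (\<Sum>i\<in>N. w i (T' i)) \<le> (\<Sum>i\<in>N. w i (sel N w i))"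
  using assms unfolding argmax_rule_def by blast+

lemma rt_welfare:
  assumes sos: "SOS_valuations n m k v" and am: "argmax_rule n m sel"
    and s: "s \<in> profiles n k" and l: "l < k"
    and Tst: "Tst \<in> allocs {..<n} m"
  shows "(\<Sum>i<n. if l \<le> s i then val v i (Tst i) (\<lambda>j. if j < n \<and> l \<le> s j then l else s j) else 0)
    \<le> welfare n v (RT_mech n v sel l) s"
proof -
  define N where "N = {i. i < n \<and> l \<le> s i}"
  define q where "q = (\<lambda>j. if j \<in> N then l else s j)"
  define w where "w = (\<lambda>i T. if i \<in> N then val v i T q else 0)"
  define T where "T = sel N w"
  have W: "welfare n v (RT_mech n v sel l) s = (\<Sum>i<n. val v i (T i) s)"
    unfolding welfare_def RT_mech_def Let_def T_def w_def q_def N_def by simp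
  have Nn: "N \<subseteq> {..<n}" by (auto simp: N_def)
  have TA: "T \<in> allocs N m" using alloc_bundle[OF am Nn] by (simp add: T_def)
  have opt: "\<And>T'. T' \<in> allocs N m \<Longrightarrow> (\<Sum>i\<in>N. w i (T' i)) \<le> (\<Sum>i\<in>N. w i (T i))"
    using alloc_bundle[OF am Nn] by (simp add: T_def)
  define Tr where "Tr i = (if i \<in> N then Tst i else {})" for i
  have TrA: "Tr \<in> allocs N m" using Tst unfolding allocs_def Tr_def by auto
  have q: "q \<in> profiles n k" using s l by (auto simp: profiles_iff q_def N_def)
  have Tm: "\<And>i. T i \<subseteq> {..<m}" using TA by (simp add: allocs_def)
  have "(\<Sum>i<n. if l \<le> s i then val v i (Tst i) (\<lambda>j. if j < n \<and> l \<le> s j then l else s j) else 0)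
      = (\<Sum>i\<in>{i \<in> {..<n}. l \<le> s i}. val v i (Tst i) (\<lambda>j. if j < n \<and> l \<le> s j then l else s j))"
    by (rule sum.inter_filter[symmetric]) simp
  also have "\<dots> = (\<Sum>i\<in>N. val v i (Tst i) q)"
    by (rule sum.cong) (auto simp: N_def q_def)
  also have "\<dots> = (\<Sum>i\<in>N. w i (Tr i))" by (rule sum.cong) (auto simp: w_def Tr_def)
  also have "\<dots> \<le> (\<Sum>i\<in>N. w i (T i))" using opt[OF TrA] .
  also have "\<dots> = (\<Sum>i\<in>N. val v i (T i) q)" by (rule sum.cong) (auto simp: w_def)
  also have "\<dots> \<le> (\<Sum>i\<in>N. val v i (T i) s)"
  proof (rule sum_mono)
    fix i assume i: "i \<in> N"
    show "val v i (T i) q \<le> val v i (T i) s"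
      by (rule goodf_mono[OF goodf_val[OF sos _ Tm] q s]) (use i in \<open>auto simp: N_def q_def\<close>)
  qed
  also have "\<dots> \<le> (\<Sum>i<n. val v i (T i) s)"
    by (rule sum_mono2) (use Nn goodf_nonneg[OF goodf_val[OF sos _ Tm] s] in auto)
  finally show ?thesis using W by simp
qed

lemma rs_welfare:
  assumes sos: "SOS_valuations n m k v" and am: "argmax_rule n m sel"
    and s: "s \<in> profiles n k" and k: "0 < k" and B: "B \<subseteq> {..<n}"
    and Tst: "Tst \<in> allocs {..<n} m"
  shows "(\<Sum>i<n. if i \<in> B then val v i (Tst i) (\<lambda>j. if j \<in> B then 0 else s j) else 0)
    \<le> welfare n v (RS_mech v sel B) s"
proof -
  define q where "q = (\<lambda>j. if j \<in> B then 0 else s j)"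
  define w where "w = (\<lambda>i T. if i \<in> B then val v i T q else 0)"
  define T where "T = sel B w"
  have W: "welfare n v (RS_mech v sel B) s = (\<Sum>i<n. val v i (T i) s)"
    unfolding welfare_def RS_mech_def T_def w_def q_def by simp
  have TA: "T \<in> allocs B m" using alloc_bundle[OF am B] by (simp add: T_def)
  have opt: "\<And>T'. T' \<in> allocs B m \<Longrightarrow> (\<Sum>i\<in>B. w i (T' i)) \<le> (\<Sum>i\<in>B. w i (T i))"
    using alloc_bundle[OF am B] by (simp add: T_def)
  define Tr where "Tr i = (if i \<in> B then Tst i else {})" for i
  have TrA: "Tr \<in> allocs B m" using Tst unfolding allocs_def Tr_def by auto
  have q: "q \<in> profiles n k" using s k B by (auto simp: profiles_iff q_def)
  have Tm: "\<And>i. T i \<subseteq> {..<m}" using TA by (simp add: allocs_def)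
  have "(\<Sum>i<n. if i \<in> B then val v i (Tst i) (\<lambda>j. if j \<in> B then 0 else s j) else 0)
      = (\<Sum>i\<in>{i \<in> {..<n}. i \<in> B}. val v i (Tst i) q)"
    unfolding q_def by (rule sum.inter_filter[symmetric]) simp
  also have "{i \<in> {..<n}. i \<in> B} = B" using B by auto
  also have "(\<Sum>i\<in>B. val v i (Tst i) q) = (\<Sum>i\<in>B. w i (Tr i))" by (rule sum.cong) (auto simp: w_def Tr_def)
  also have "\<dots> \<le> (\<Sum>i\<in>B. w i (T i))" using opt[OF TrA] .
  also have "\<dots> = (\<Sum>i\<in>B. val v i (T i) q)" by (rule sum.cong) (auto simp: w_def)
  also have "\<dots> \<le> (\<Sum>i\<in>B. val v i (T i) s)"
  proof (rule sum_mono)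
    fix i assume i: "i \<in> B"
    show "val v i (T i) q \<le> val v i (T i) s"
      by (rule goodf_mono[OF goodf_val[OF sos _ Tm] q s]) (use i B in \<open>auto simp: q_def\<close>)
  qed
  also have "\<dots> \<le> (\<Sum>i<n. val v i (T i) s)"
    by (rule sum_mono2) (use B goodf_nonneg[OF goodf_val[OF sos _ Tm] s] in auto)
  finally show ?thesis using W by simp
qed


lemma rt_ic:
  assumes sos: "SOS_valuations n m k v" and am: "argmax_rule n m sel"
    and l1: "1 \<le> l" and lk: "l < k"
  shows "expost_IC_IR n k v (RT_mech n v sel l)"
  unfolding expost_IC_IR_def
proof (intro ballI allI impI conjI)
  define alloc where "alloc = (\<lambda>s. let Nge = {i. i < n \<and> l \<le> s i} in
                   sel Nge (\<lambda>i T. if i \<in> Nge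
                                   then val v i T (\<lambda>j. if j \<in> Nge then l else s j) else 0))"
  have M: "RT_mech n v sel l = (alloc, (\<lambda>s i. val v i (alloc s i) (s(i := l - 1))))"
    unfolding RT_mech_def alloc_def Let_def by (rule refl)
  have AA: "alloc r \<in> allocs {i. i < n \<and> l \<le> r i} m" for r
    unfolding alloc_def Let_def by (rule alloc_bundle(1)[OF am]) auto
  have Am: "alloc r i \<subseteq> {..<m}" for r i using AA[of r] by (simp add: allocs_def)
  have A0: "\<not> (i < n \<and> l \<le> r i) \<Longrightarrow> alloc r i = {}" for r i using AA[of r] by (simp add: allocs_def)
  have cong: "alloc r = alloc r'" if c1: "\<forall>j. j<n \<longrightarrow> (l \<le> r j \<longleftrightarrow> l \<le> r' j)"
     and c2: "\<forall>j. \<not>(j<n \<and> l \<le> r j) \<longrightarrow> r j = r' j" for r r'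
  proof -
    have N: "{j. j<n \<and> l \<le> r j} = {j. j<n \<and> l \<le> r' j}" using c1 by auto
    have F: "(\<lambda>j. if j \<in> {j. j<n \<and> l \<le> r' j} then l else r j)
        = (\<lambda>j. if j \<in> {j. j<n \<and> l \<le> r' j} then l else r' j)"
      using c1 c2 by (auto simp: fun_eq_iff)
    show ?thesis unfolding alloc_def Let_def N F by (rule refl)
  qed
  fix s i assume s: "s \<in> profiles n k" and i: "i < n"
  have U: "utility v (RT_mech n v sel l) i (s(i:=x)) s
      = val v i (alloc (s(i:=x)) i) s - val v i (alloc (s(i:=x)) i) (s(i := l - 1))" for x
    unfolding utility_def M by simp
  have U0: "utility v (RT_mech n v sel l) i (s(i:=x)) s = 0" if "x < l" for x
    unfolding U using A0[of i "s(i:=x)"] that by (simp add: val_def)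
  have sl: "s(i := l - 1) \<in> profiles n k" using s i lk by (auto simp: profiles_iff)
  have g: "goodf n k (val v i T)" if "T \<subseteq> {..<m}" for T using goodf_val[OF sos i that] .
  have ss: "s(i := s i) = s" by simp
  show "0 \<le> utility v (RT_mech n v sel l) i s s"
  proof (cases "s i < l")
    case True then show ?thesis using U0[of "s i"] ss by simp
  next
    case False
    have "val v i (alloc s i) (s(i := l - 1)) \<le> val v i (alloc s i) s"
      by (rule goodf_mono[OF g[OF Am] sl s]) (use False in auto)
    then show ?thesis using U[of "s i"] ss by simp
  qed
  fix x assume x: "x < k"
  show "utility v (RT_mech n v sel l) i (s(i := x)) s \<le> utility v (RT_mech n v sel l) i s s"
  proof (cases "x < l")
    case True
    have "0 \<le> utility v (RT_mech n v sel l) i s s"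
    proof (cases "s i < l")
      case True then show ?thesis using U0[of "s i"] ss by simp
    next
      case False
      have "val v i (alloc s i) (s(i := l - 1)) \<le> val v i (alloc s i) s"
        by (rule goodf_mono[OF g[OF Am] sl s]) (use False in auto)
      then show ?thesis using U[of "s i"] ss by simp
    qed
    then show ?thesis using U0[OF True] by simp
  next
    case xl: False
    show ?thesis
    proof (cases "s i < l")
      case True
      have "val v i (alloc (s(i:=x)) i) s \<le> val v i (alloc (s(i:=x)) i) (s(i := l - 1))"
        by (rule goodf_mono[OF g[OF Am] s sl]) (use True in auto)
      then show ?thesis using U[of x] U0[of "s i"] True ss by simp
    next
      case False
      have "alloc (s(i:=x)) = alloc s" by (rule cong) (use xl False i in auto)
      then show ?thesis using U[of x] U[of "s i"] ss by simp
    qed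
  qed
qed

lemma rs_ic:
  assumes sos: "SOS_valuations n m k v" and am: "argmax_rule n m sel"
    and B: "B \<subseteq> {..<n}"
  shows "expost_IC_IR n k v (RS_mech v sel B)"
  unfolding expost_IC_IR_def
proof (intro ballI allI impI conjI)
  define alloc where "alloc = (\<lambda>s. sel B (\<lambda>i T. if i \<in> B then val v i T (\<lambda>j. if j \<in> B then 0 else s j) else 0))"
  have M: "RS_mech v sel B = (alloc, (\<lambda>s i. 0))"
    unfolding RS_mech_def alloc_def by (rule refl)
  have AA: "alloc r \<in> allocs B m" for r
    unfolding alloc_def by (rule alloc_bundle(1)[OF am B])
  have Am: "alloc r i \<subseteq> {..<m}" for r i using AA[of r] by (simp add: allocs_def)
  fix s i assume s: "s \<in> profiles n k" and i: "i < n"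
  have g: "goodf n k (val v i T)" if "T \<subseteq> {..<m}" for T using goodf_val[OF sos i that] .
  show "0 \<le> utility v (RS_mech v sel B) i s s"
    unfolding utility_def M using goodf_nonneg[OF g[OF Am] s] by simp
  fix x assume x: "x < k"
  have "alloc (s(i:=x)) i = alloc s i"
  proof (cases "i \<in> B")
    case True
    have E: "(\<lambda>j. if j \<in> B then 0 else (s(i:=x)) j) = (\<lambda>j. if j \<in> B then 0 else s j)"
      using True by (auto simp: fun_eq_iff)
    show ?thesis unfolding alloc_def E by (rule refl)
  next
    case False
    then show ?thesis using AA[of s] AA[of "s(i:=x)"] by (simp add: allocs_def)
  qed
  then show "utility v (RS_mech v sel B) i (s(i := x)) s \<le> utility v (RS_mech v sel B) i s s"
    unfolding utility_def M by simp
qed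


lemma allocs_finite: "finite (allocs {..<n} m)"
proof (rule finite_subset)
  show "allocs {..<n} m \<subseteq> {f. \<forall>x. (x \<in> {..<n} \<longrightarrow> f x \<in> Pow {..<m}) \<and> (x \<notin> {..<n} \<longrightarrow> f x = {})}"
    unfolding allocs_def by auto
  show "finite {f. \<forall>x. (x \<in> {..<n} \<longrightarrow> f x \<in> Pow {..<m}) \<and> (x \<notin> {..<n} \<longrightarrow> f x = ({}::nat set))}"
    by (rule finite_set_of_finite_funs) auto
qed

lemma allocs_empty: "(\<lambda>_. {}) \<in> allocs N m"
  unfolding allocs_def by auto

theorem mainTheorem8:
  fixes n m k :: nat and v :: valuations
    and sel :: "nat set \<Rightarrow> (nat \<Rightarrow> nat set \<Rightarrow> real) \<Rightarrow> nat \<Rightarrow> nat set"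
  assumes "k \<ge> 2"
    and "SOS_valuations n m k v"
    and "argmax_rule n m sel"
  shows "universal_expost_IC_IR n k v (kHL n k v sel)
       \<and> (\<forall>s\<in>profiles n k.
            measure_pmf.expectation (kHL n k v sel) (\<lambda>M. welfare n v M s)
              \<ge> OPT n m v s / (real k + 3))"
proof -
  note k = assms(1) and sos = assms(2) and am = assms(3)
  define p where "p = (real k - 1) / (real k + 3)"
  have p0: "0 \<le> p" "p \<le> 1" using k by (auto simp: p_def)
  have L: "finite {1..<k}" "{1..<k} \<noteq> {}" using k by auto
  have P: "finite (Pow {..<n})" "Pow {..<n} \<noteq> {}" by auto
  have setRT: "set_pmf (RT n k v sel) = RT_mech n v sel ` {1..<k}"
    unfolding RT_def using L by simp
  have setRS: "set_pmf (RS n v sel) = RS_mech v sel ` Pow {..<n}"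
    unfolding RS_def using P by simp
  have part1: "universal_expost_IC_IR n k v (kHL n k v sel)"
    unfolding universal_expost_IC_IR_def
  proof
    fix M assume "M \<in> set_pmf (kHL n k v sel)"
    then have "M \<in> set_pmf (RT n k v sel) \<or> M \<in> set_pmf (RS n v sel)"
      unfolding kHL_def by (auto split: if_splits)
    then show "expost_IC_IR n k v M"
    proof
      assume "M \<in> set_pmf (RT n k v sel)"
      then obtain l where "l \<in> {1..<k}" "M = RT_mech n v sel l" using setRT by auto
      then show ?thesis using rt_ic[OF sos am] by auto
    next
      assume "M \<in> set_pmf (RS n v sel)"
      then obtain B where "B \<in> Pow {..<n}" "M = RS_mech v sel B" using setRS by auto
      then show ?thesis using rs_ic[OF sos am] by auto
    qed
  qed
  have part2: "measure_pmf.expectation (kHL n k v sel) (\<lambda>M. welfare n v M s)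
              \<ge> OPT n m v s / (real k + 3)" if s: "s \<in> profiles n k" for s
  proof -
    define W where "W M = welfare n v M s" for M
    define SRT where "SRT = (\<Sum>l\<in>{1..<k}. W (RT_mech n v sel l))"
    define SRS where "SRS = (\<Sum>B\<in>Pow {..<n}. W (RS_mech v sel B))"
    have ERT: "measure_pmf.expectation (RT n k v sel) W = SRT / (real k - 1)"
      unfolding RT_def SRT_def using L k by (simp add: integral_pmf_of_set of_nat_diff)
    have ERS: "measure_pmf.expectation (RS n v sel) W = SRS / 2 ^ n"
      unfolding RS_def SRS_def using P by (simp add: integral_pmf_of_set card_Pow)
    have E: "measure_pmf.expectation (kHL n k v sel) W
        = p * (SRT / (real k - 1)) + (1 - p) * (SRS / 2 ^ n)"
    proof -
      have "measure_pmf.expectation (kHL n k v sel) W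
         = (\<Sum>b\<in>UNIV. pmf (bernoulli_pmf p) b *\<^sub>R measure_pmf.expectation (if b then RT n k v sel else RS n v sel) W)"
        unfolding kHL_def p_def[symmetric]
        by (rule pmf_expectation_bind) (auto simp: setRT setRS L)
      also have "\<dots> = p * (SRT / (real k - 1)) + (1 - p) * (SRS / 2 ^ n)"
        using p0 by (simp add: UNIV_bool ERT ERS)
      finally show ?thesis .
    qed
    have Ofin: "finite ((\<lambda>T. \<Sum>i<n. val v i (T i) s) ` allocs {..<n} m)"
      using allocs_finite by simp
    have One: "(\<lambda>T. \<Sum>i<n. val v i (T i) s) ` allocs {..<n} m \<noteq> {}"
      using allocs_empty by blast
    obtain Tst where Tst: "Tst \<in> allocs {..<n} m" and OPT: "OPT n m v s = (\<Sum>i<n. val v i (Tst i) s)"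
      using Max_in[OF Ofin One] unfolding OPT_def by auto
    have Tm: "Tst i \<subseteq> {..<m}" for i using Tst by (simp add: allocs_def)
    define f where "f i = val v i (Tst i)" for i
    have gf: "goodf n k (f i)" if "i < n" for i unfolding f_def using goodf_val[OF sos that Tm] .
    define a where "a l i = (if l \<le> s i then f i (\<lambda>j. if j < n \<and> l \<le> s j then l else s j) else 0)" for l i
    define b where "b B i = (if i \<in> B then f i (\<lambda>j. if j \<in> B then 0 else s j) else 0)" for B i
    have "SRT \<ge> (\<Sum>l\<in>{1..<k}. \<Sum>i<n. a l i)"
      unfolding SRT_def W_def a_def f_def
      by (rule sum_mono) (rule rt_welfare[OF sos am s _ Tst], simp)
    also have "(\<Sum>l\<in>{1..<k}. \<Sum>i<n. a l i) = (\<Sum>i<n. \<Sum>l\<in>{1..<k}. a l i)" by (rule sum.swap)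
    finally have R1: "(\<Sum>i<n. \<Sum>l\<in>{1..<k}. a l i) \<le> SRT" .
    have "SRS \<ge> (\<Sum>B\<in>Pow {..<n}. \<Sum>i<n. b B i)"
      unfolding SRS_def W_def b_def f_def
      by (rule sum_mono) (rule rs_welfare[OF sos am s], use k Tst in auto)
    also have "(\<Sum>B\<in>Pow {..<n}. \<Sum>i<n. b B i) = (\<Sum>i<n. \<Sum>B\<in>Pow {..<n}. b B i)" by (rule sum.swap)
    finally have R2: "(\<Sum>i<n. \<Sum>B\<in>Pow {..<n}. b B i) \<le> SRS" .
    have A1: "f i s - f i (s(i:=0)) \<le> (\<Sum>l\<in>{1..<k}. a l i)" if "i < n" for i
      unfolding a_def using rt_agent[OF gf[OF that] s that] .
    have A2: "2 ^ n * f i (s(i:=0)) \<le> 4 * (\<Sum>B\<in>Pow {..<n}. b B i)" if "i < n" for i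
      unfolding b_def using rs_agent[OF gf[OF that] s that] .
    have "OPT n m v s = (\<Sum>i<n. (f i s - f i (s(i:=0))) + (2 ^ n * f i (s(i:=0))) / 2 ^ n)"
      unfolding OPT f_def by simp
    also have "\<dots> \<le> (\<Sum>i<n. (\<Sum>l\<in>{1..<k}. a l i) + (4 * (\<Sum>B\<in>Pow {..<n}. b B i)) / 2 ^ n)"
    proof (rule sum_mono)
      fix i assume i: "i \<in> {..<n}"
      have "f i (s(i:=0)) \<le> (4 * (\<Sum>B\<in>Pow {..<n}. b B i)) / 2 ^ n"
        using A2[of i] i by (simp add: pos_le_divide_eq mult.commute)
      then show "(f i s - f i (s(i:=0))) + (2 ^ n * f i (s(i:=0))) / 2 ^ n
          \<le> (\<Sum>l\<in>{1..<k}. a l i) + (4 * (\<Sum>B\<in>Pow {..<n}. b B i)) / 2 ^ n"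
        using A1[of i] i by simp
    qed
    also have "\<dots> = (\<Sum>i<n. \<Sum>l\<in>{1..<k}. a l i) + 4 * (\<Sum>i<n. \<Sum>B\<in>Pow {..<n}. b B i) / 2 ^ n"
      by (simp add: sum.distrib sum_divide_distrib sum_distrib_left)
    also have "\<dots> \<le> SRT + 4 * SRS / 2 ^ n"
      using R1 R2 by (auto intro!: add_mono divide_right_mono)
    finally have key: "OPT n m v s \<le> SRT + 4 * SRS / 2 ^ n" .
    have k1: "real k - 1 > 0" "real k + 3 > 0" using k by auto
    have "p * (SRT / (real k - 1)) + (1 - p) * (SRS / 2 ^ n) = (SRT + 4 * SRS / 2 ^ n) / (real k + 3)"
    proof -
      have e1: "p * (SRT / (real k - 1)) = SRT / (real k + 3)"
      proof -
        have "p * (SRT / (real k - 1)) = ((real k - 1) * SRT) / ((real k - 1) * (real k + 3))"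
          unfolding p_def by (simp add: mult.commute)
        also have "\<dots> = SRT / (real k + 3)" using k1 by simp
        finally show ?thesis .
      qed
      have e2: "1 - p = 4 / (real k + 3)"
        unfolding p_def using k1 by (simp add: field_simps)
      show ?thesis unfolding e1 e2 by (simp add: add_divide_distrib)
    qed
    then have "measure_pmf.expectation (kHL n k v sel) W = (SRT + 4 * SRS / 2 ^ n) / (real k + 3)"
      using E by simp
    then show ?thesis using key k1 unfolding W_def by (simp add: divide_right_mono)
  qed
  show ?thesis using part1 part2 by blast
qed

end
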